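(* In the timely decision problem described in the context, define $\alpha_0=\beta_0=0\in\mathbb{R}^{\Theta}$ and, for $t\ge1$ and $\theta\in\Theta$, with $\bar p_t\doteq\sum_{\theta'\in\Theta}p_{\theta',\lambda_{t-1}}\mu_{t-1}(\theta')$, $$\alpha_t(\theta)=\alpha_{t-1}(\theta)-\mu_{t-1}(\theta)\,\nu_{t-1}\nu_t\,\frac{p_{\theta,\lambda_{t-1}}-\bar p_t}{1-\bar p_t},\qquad \beta_t(\theta)=\beta_{t-1}(\theta)+\mu_{t-1}(\theta)\,\nu_{t-1}(1-\nu_t)\,\frac{p_{\theta,\lambda_{t-1}}-\bar p_t}{\bar p_t}.$$ Then the posterior decomposes as $\mu_t=\tilde\mu_t+\alpha_t+\beta_t$, where $\tilde\mu_t\doteq\mu_t-\alpha_t-\beta_t$ is a martingale: $\mathbb{E}[\tilde\mu_t-\tilde\mu_{t-1}\mid \lambda_{t-1},\mu_{t-1},\nu_{t-1}]=0$ for all $t\ge1$. Here $\tilde\mu_t$ captures the information from the acquired outcomes, $\alpha_t$ (a function of $\mu_{t-1},\lambda_{t-1},\nu_{t-1},\nu_t$ and the past) compensates for the bias due to survival, and $\beta_t$ compensates for the bias due to stoppage.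
   Context: $\Theta,\Lambda,\Omega$ are finite nonempty sets; $\Delta(\Theta)$ is the simplex over $\Theta$. For $\theta\in\Theta,\lambda\in\Lambda$, $q_{\theta,\lambda}$ is a known distribution on $\Omega$ and $p_{\theta,\lambda}\in(0,1)$. A latent $\theta\sim\mu_0$ (known prior). Survival process $\nu_t\in\{0,1\}$, $\nu_0=1$. At each time $t$ with $\nu_t=1$ an acquisition $\lambda_t\in\Lambda$ is chosen as a (possibly randomized) function of the observed history; given $\theta,\nu_t=1,\lambda_t$, $\nu_{t+1}=0$ with probability $p_{\theta,\lambda_t}$, otherwise $\nu_{t+1}=1$ and an outcome $\omega_{t+1}\sim q_{\theta,\lambda_t}$ is observed, conditionally independent of the past given $\theta,\lambda_t$; once $\nu_t=0$ nothing more happens and $\nu$ stays $0$. $\mu_t\in\Delta(\Theta)$ is the posterior of $\theta$ given the observed history ($\lambda_{0:t-1}$, $\nu_{1:t}$, observed outcomes); it satisfies $\mu_t=\mu_{t-1}$ if $\nu_{t-1}=0$, $\mu_t(\theta)\propto p_{\theta,\lambda_{t-1}}\mu_{t-1}(\theta)$ if $\nu_{t-1}=1,\nu_t=0$, and $\mu_t(\theta)\propto(1-p_{\theta,\lambda_{t-1}})q_{\theta,\lambda_{t-1}}(\omega_t)\mu_{t-1}(\theta)$ if $\nu_t=1$. *)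

theory Defs
  imports "HOL-Probability.Probability"
begin

text \<open>Outcome recorded at one time step of the observed history:
  Dead = the process was already stopped (nothing happens),
  Died = the process was alive and stopped now (nu becomes 0),
  Obs w = the process survived and outcome w was observed.\<close>
datatype 'o outcome = Dead | Died | Obs 'o

type_synonym ('l, 'o) hist = "('l \<times> 'o outcome) list"

fun nu :: "nat \<Rightarrow> ('l, 'o) hist \<Rightarrow> real" where
  "nu 0 h = 1"
| "nu (Suc t) h = (if nu t h = 1 \<and> (\<exists>w. snd (h ! t) = Obs w) then 1 else 0)"

definition lam :: "nat \<Rightarrow> ('l, 'o) hist \<Rightarrow> 'l" where
  "lam t h = fst (h ! t)"

definition normalize :: "('th::finite \<Rightarrow> real) \<Rightarrow> 'th \<Rightarrow> real" where
  "normalize f = (\<lambda>\<theta>. f \<theta> / (\<Sum>\<theta>'\<in>UNIV. f \<theta>'))"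

fun mu :: "'th::finite pmf \<Rightarrow> ('th \<Rightarrow> 'l \<Rightarrow> real) \<Rightarrow> ('th \<Rightarrow> 'l \<Rightarrow> 'o pmf)
            \<Rightarrow> nat \<Rightarrow> ('l, 'o) hist \<Rightarrow> 'th \<Rightarrow> real" where
  "mu mu0 p q 0 h = pmf mu0"
| "mu mu0 p q (Suc t) h =
     (if nu t h = 0 then mu mu0 p q t h
      else if nu (Suc t) h = 0 then
        normalize (\<lambda>\<theta>. p \<theta> (lam t h) * mu mu0 p q t h \<theta>)
      else (case snd (h ! t) of
              Obs w \<Rightarrow> normalize (\<lambda>\<theta>. (1 - p \<theta> (lam t h)) * pmf (q \<theta> (lam t h)) w
                                      * mu mu0 p q t h \<theta>)
            | _ \<Rightarrow> mu mu0 p q t h))"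

definition pbar :: "'th::finite pmf \<Rightarrow> ('th \<Rightarrow> 'l \<Rightarrow> real) \<Rightarrow> ('th \<Rightarrow> 'l \<Rightarrow> 'o pmf)
            \<Rightarrow> nat \<Rightarrow> ('l, 'o) hist \<Rightarrow> real" where
  "pbar mu0 p q t h = (\<Sum>\<theta>'\<in>UNIV. p \<theta>' (lam t h) * mu mu0 p q t h \<theta>')"

fun alpha :: "'th::finite pmf \<Rightarrow> ('th \<Rightarrow> 'l \<Rightarrow> real) \<Rightarrow> ('th \<Rightarrow> 'l \<Rightarrow> 'o pmf)
            \<Rightarrow> nat \<Rightarrow> ('l, 'o) hist \<Rightarrow> 'th \<Rightarrow> real" where
  "alpha mu0 p q 0 h = (\<lambda>_. 0)"
| "alpha mu0 p q (Suc t) h = (\<lambda>\<theta>. alpha mu0 p q t h \<theta>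
      - mu mu0 p q t h \<theta> * nu t h * nu (Suc t) h
        * (p \<theta> (lam t h) - pbar mu0 p q t h) / (1 - pbar mu0 p q t h))"

fun beta :: "'th::finite pmf \<Rightarrow> ('th \<Rightarrow> 'l \<Rightarrow> real) \<Rightarrow> ('th \<Rightarrow> 'l \<Rightarrow> 'o pmf)
            \<Rightarrow> nat \<Rightarrow> ('l, 'o) hist \<Rightarrow> 'th \<Rightarrow> real" where
  "beta mu0 p q 0 h = (\<lambda>_. 0)"
| "beta mu0 p q (Suc t) h = (\<lambda>\<theta>. beta mu0 p q t h \<theta>
      + mu mu0 p q t h \<theta> * nu t h * (1 - nu (Suc t) h)
        * (p \<theta> (lam t h) - pbar mu0 p q t h) / pbar mu0 p q t h)"

definition mutilde :: "'th::finite pmf \<Rightarrow> ('th \<Rightarrow> 'l \<Rightarrow> real) \<Rightarrow> ('th \<Rightarrow> 'l \<Rightarrow> 'o pmf)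
            \<Rightarrow> nat \<Rightarrow> ('l, 'o) hist \<Rightarrow> 'th \<Rightarrow> real" where
  "mutilde mu0 p q t h = (\<lambda>\<theta>. mu mu0 p q t h \<theta> - alpha mu0 p q t h \<theta> - beta mu0 p q t h \<theta>)"

definition step :: "('th \<Rightarrow> 'l \<Rightarrow> real) \<Rightarrow> ('th \<Rightarrow> 'l \<Rightarrow> 'o pmf) \<Rightarrow> real \<Rightarrow> 'th \<Rightarrow> 'l
                    \<Rightarrow> 'o outcome pmf" where
  "step p q v \<theta> l = (if v = 1 then
       bernoulli_pmf (p \<theta> l) \<bind> (\<lambda>d. if d then return_pmf Died else map_pmf Obs (q \<theta> l))
     else return_pmf Dead)"

text \<open>Joint law of (theta, observed history of length t) under prior mu0 and
  (randomized, history-dependent) acquisition policy pol.\<close>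
fun joint :: "'th::finite pmf \<Rightarrow> ('th \<Rightarrow> 'l \<Rightarrow> real) \<Rightarrow> ('th \<Rightarrow> 'l \<Rightarrow> 'o pmf)
            \<Rightarrow> (('l, 'o) hist \<Rightarrow> 'l pmf) \<Rightarrow> nat \<Rightarrow> ('th \<times> ('l, 'o) hist) pmf" where
  "joint mu0 p q pol 0 = map_pmf (\<lambda>\<theta>. (\<theta>, [])) mu0"
| "joint mu0 p q pol (Suc t) = joint mu0 p q pol t \<bind> (\<lambda>(\<theta>, h).
      pol h \<bind> (\<lambda>l. map_pmf (\<lambda>r. (\<theta>, h @ [(l, r)])) (step p q (nu t h) \<theta> l)))"

end

theory Submission
  imports Defs
begin

instance outcome :: (finite) finite
proof
  have "(UNIV :: 'a outcome set) = {Dead, Died} \<union> range Obs"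
    by (auto intro: outcome.exhaust)
  moreover have "finite ({Dead, Died} \<union> range (Obs :: 'a \<Rightarrow> 'a outcome))" by simp
  ultimately show "finite (UNIV :: 'a outcome set)" by metis
qed

lemma nu_01: "nu t h = 0 \<or> nu t h = 1"
  by (cases t) auto

lemma nu_append: "t \<le> length h \<Longrightarrow> nu t (h @ xs) = nu t h"
  by (induction t) (auto simp: nth_append)

lemma lam_append: "length h = t \<Longrightarrow> lam t (h @ [(l, r)]) = l"
  by (simp add: lam_def nth_append)

lemma lam_append2: "t < length h \<Longrightarrow> lam t (h @ xs) = lam t h"
  by (simp add: lam_def nth_append)

lemma mu_append: "t \<le> length h \<Longrightarrow> mu mu0 p q t (h @ xs) = mu mu0 p q t h"
proof (induction t)
  case 0 then show ?case by simp
next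
  case (Suc t)
  then have "t < length h" by simp
  then show ?case using Suc by (simp add: nth_append nu_append lam_append2 split: outcome.split)
qed

lemma normalize_scale:
  fixes f :: "'th::finite \<Rightarrow> real"
  assumes "\<And>x. f x \<ge> 0"
  shows "f x = (\<Sum>y\<in>UNIV. f y) * normalize f x"
proof (cases "(\<Sum>y\<in>UNIV. f y) = 0")
  case True
  then have "\<forall>y\<in>UNIV. f y = 0" using sum_nonneg_eq_0_iff[of UNIV f] assms by auto
  then show ?thesis by simp
next
  case False then show ?thesis by (simp add: normalize_def)
qed

lemma normalize_props:
  fixes f :: "'th::finite \<Rightarrow> real"
  assumes "\<And>x. f x \<ge> 0"
  shows "normalize f x \<ge> 0" "(\<Sum>y\<in>UNIV. normalize f y) = 1 \<or> (\<forall>y. normalize f y = 0)"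
proof -
  show "normalize f x \<ge> 0" using assms by (simp add: normalize_def sum_nonneg)
  show "(\<Sum>y\<in>UNIV. normalize f y) = 1 \<or> (\<forall>y. normalize f y = 0)"
  proof (cases "(\<Sum>y\<in>UNIV. f y) = 0")
    case True then show ?thesis by (simp add: normalize_def)
  next
    case False then show ?thesis by (simp add: normalize_def sum_divide_distrib[symmetric])
  qed
qed

lemma mu_inv:
  assumes p: "\<forall>\<theta>' l'. 0 < p \<theta>' l' \<and> p \<theta>' l' < 1"
  shows "(\<forall>x. mu mu0 p q t h x \<ge> 0) \<and> ((\<Sum>y\<in>UNIV. mu mu0 p q t h y) = 1 \<or> (\<forall>y. mu mu0 p q t h y = 0))"
proof (induction t)
  case 0
  have "(\<Sum>y\<in>UNIV. pmf mu0 y) = 1"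
    using sum_pmf_eq_1[of UNIV mu0] by simp
  then show ?case by simp
next
  case (Suc t)
  let ?m = "mu mu0 p q t h"
  have f1: "\<And>x. p x (lam t h) * ?m x \<ge> 0" using Suc p by (simp add: less_imp_le)
  have f2: "\<And>x w. (1 - p x (lam t h)) * pmf (q x (lam t h)) w * ?m x \<ge> 0" using Suc p
    by (simp add: less_imp_le)
  consider "nu t h = 0" | "nu t h \<noteq> 0" "nu (Suc t) h = 0" | w where "nu t h \<noteq> 0" "nu (Suc t) h \<noteq> 0" "snd (h ! t) = Obs w"
    by (cases "snd (h ! t)") (auto split: if_splits)
  then show ?case
  proof cases
    case 1 then show ?thesis using Suc by simp
  next
    case 2 then show ?thesis using normalize_props[of "\<lambda>\<theta>. p \<theta> (lam t h) * ?m \<theta>", OF f1] by simp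
  next
    case 3 then show ?thesis
      using normalize_props[of "\<lambda>\<theta>. (1 - p \<theta> (lam t h)) * pmf (q \<theta> (lam t h)) w * ?m \<theta>", OF f2] by simp
  qed
qed

lemma sum_outcome:
  fixes f :: "'x::finite outcome \<Rightarrow> 'b::comm_monoid_add"
  shows "(\<Sum>r\<in>UNIV. f r) = f Dead + f Died + (\<Sum>w\<in>UNIV. f (Obs w))"
proof -
  have U: "(UNIV :: 'x outcome set) = insert Dead (insert Died (range Obs))"
    by (auto intro: outcome.exhaust)
  have "(\<Sum>r\<in>UNIV. f r) = f Dead + (f Died + (\<Sum>r\<in>range Obs. f r))"
    unfolding U by (simp add: sum.insert image_iff finite_imageI)
  also have "(\<Sum>r\<in>range Obs. f r) = (\<Sum>w\<in>UNIV. f (Obs w))"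
    by (subst sum.reindex) (auto simp: inj_def)
  finally show ?thesis by (simp add: add.assoc)
qed

lemma pmf_step1:
  assumes "0 \<le> p \<theta> l" "p \<theta> l \<le> 1"
  shows "pmf (step p q 1 \<theta> l) Dead = 0" "pmf (step p q 1 \<theta> l) Died = p \<theta> l"
    "pmf (step p q 1 \<theta> l) (Obs w) = (1 - p \<theta> l) * pmf (q \<theta> l) w"
proof -
  have o1: "pmf (map_pmf Obs (q \<theta> l)) Dead = 0" "pmf (map_pmf Obs (q \<theta> l)) Died = 0"
    by (auto simp: pmf_eq_0_set_pmf)
  have o2: "pmf (map_pmf Obs (q \<theta> l)) (Obs w) = pmf (q \<theta> l) w"
    by (rule pmf_map_inj') (auto simp: inj_def)
  show "pmf (step p q 1 \<theta> l) Dead = 0" "pmf (step p q 1 \<theta> l) Died = p \<theta> l"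
    "pmf (step p q 1 \<theta> l) (Obs w) = (1 - p \<theta> l) * pmf (q \<theta> l) w"
    using assms o1 o2 by (simp_all add: step_def pmf_bind)
qed

lemma pmf_step0: "v \<noteq> 1 \<Longrightarrow> step p q v \<theta> l = return_pmf Dead"
  by (simp add: step_def)

lemma sum_step1:
  fixes q :: "'th \<Rightarrow> 'l \<Rightarrow> 'o::finite pmf"
  assumes "0 \<le> p \<theta> l" "p \<theta> l \<le> 1"
  shows "(\<Sum>r\<in>UNIV. pmf (step p q 1 \<theta> l) r * f r)
     = p \<theta> l * f Died + (\<Sum>w\<in>UNIV. (1 - p \<theta> l) * pmf (q \<theta> l) w * f (Obs w))"
  using assms by (subst sum_outcome) (simp add: pmf_step1)

lemma sum_step0:
  fixes q :: "'th \<Rightarrow> 'l \<Rightarrow> 'o::finite pmf"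
  shows "v \<noteq> 1 \<Longrightarrow> (\<Sum>r\<in>UNIV. pmf (step p q v \<theta> l) r * f r) = f Dead"
  by (subst sum_outcome) (simp add: pmf_step0)

lemma nu_snoc: "length h = t \<Longrightarrow> nu (Suc t) (h @ [(l, r)]) =
   (if nu t h = 1 \<and> (\<exists>w. r = Obs w) then 1 else 0)"
  by (simp add: nu_append nth_append)

lemma mu_snoc: "length h = t \<Longrightarrow> mu mu0 p q t (h @ xs) = mu mu0 p q t h"
  by (simp add: mu_append)

lemma nu_snoc': "length h = t \<Longrightarrow> nu t (h @ xs) = nu t h"
  by (simp add: nu_append)

definition Zf where
  "Zf mu0 p q t h l r = (if nu t h \<noteq> 1 then (if r = Dead then 1 else 0) else
     (case r of Dead \<Rightarrow> 0
       | Died \<Rightarrow> (\<Sum>\<theta>\<in>UNIV. p \<theta> l * mu mu0 p q t h \<theta>)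
       | Obs w \<Rightarrow> (\<Sum>\<theta>\<in>UNIV. (1 - p \<theta> l) * pmf (q \<theta> l) w * mu mu0 p q t h \<theta>)))"

lemma bayes_step:
  assumes p: "\<forall>\<theta>' l'. 0 < p \<theta>' l' \<and> p \<theta>' l' < 1" and len: "length h = t"
  shows "mu mu0 p q t h \<theta>' * pmf (step p q (nu t h) \<theta>' l) r
     = Zf mu0 p q t h l r * mu mu0 p q (Suc t) (h @ [(l, r)]) \<theta>'"
proof -
  let ?m = "mu mu0 p q t h"
  have m0: "\<And>x. ?m x \<ge> 0" using mu_inv[OF p] by blast
  have f1: "\<And>x. p x l * ?m x \<ge> 0" using m0 p by (simp add: less_imp_le)
  have f2: "\<And>x w. (1 - p x l) * pmf (q x l) w * ?m x \<ge> 0" using m0 p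
    by (simp add: less_imp_le)
  have pp: "0 \<le> p \<theta>' l" "p \<theta>' l \<le> 1" using p by (auto simp: less_imp_le)
  show ?thesis
  proof (cases "nu t h = 1")
    case False
    then have "nu t h = 0" using nu_01 by blast
    then show ?thesis using len
      by (cases r) (simp_all add: pmf_step0 Zf_def nu_snoc' mu_snoc)
  next
    case True
    show ?thesis
    proof (cases r)
      case Dead
      then show ?thesis using True len pp by (simp add: pmf_step1 Zf_def)
    next
      case Died
      then show ?thesis using True len pp
        normalize_scale[of "\<lambda>\<theta>. p \<theta> l * ?m \<theta>", OF f1, of \<theta>']
        by (simp add: pmf_step1 Zf_def nu_snoc nu_snoc' mu_snoc lam_append mult_ac nth_append)
    next
      case (Obs w)
      then show ?thesis using True len pp
        normalize_scale[of "\<lambda>\<theta>. (1 - p \<theta> l) * pmf (q \<theta> l) w * ?m \<theta>", OF f2, of \<theta>']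
        by (simp add: pmf_step1 Zf_def nu_snoc nu_snoc' mu_snoc lam_append mult_ac nth_append)
    qed
  qed
qed

lemma exp_finite_type:
  fixes M :: "'a::finite pmf" and f :: "'a \<Rightarrow> real"
  shows "measure_pmf.expectation M f = (\<Sum>x\<in>UNIV. pmf M x * f x)"
  by (subst integral_measure_pmf_real[of UNIV]) (auto simp: mult.commute)

lemma finite_H: "finite {h :: ('l::finite \<times> 'o::finite outcome) list. length h = t}"
  using finite_lists_length_eq[of "UNIV :: ('l \<times> 'o outcome) set" t] by simp

lemma set_joint:
  fixes q :: "'th::finite \<Rightarrow> 'l \<Rightarrow> 'o pmf"
  shows "set_pmf (joint mu0 p q pol t) \<subseteq> UNIV \<times> {h. length h = t}"
  by (induction t) (auto simp: set_bind_pmf subset_iff)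

lemma sum_pairs:
  fixes g :: "'a::finite \<times> 'b::finite \<Rightarrow> real"
  shows "(\<Sum>x\<in>UNIV. g x) = (\<Sum>l\<in>UNIV. \<Sum>r\<in>UNIV. g (l, r))"
  by (simp add: UNIV_Times_UNIV[symmetric] sum.cartesian_product del: UNIV_Times_UNIV)

lemma sum_H_Suc:
  fixes g :: "('l::finite \<times> 'o::finite outcome) list \<Rightarrow> real"
  shows "(\<Sum>h1\<in>{h. length h = Suc t}. g h1)
       = (\<Sum>h\<in>{h. length h = t}. \<Sum>l\<in>UNIV. \<Sum>r\<in>UNIV. g (h @ [(l, r)]))"
proof -
  have img: "{h. length h = Suc t} = (\<lambda>(h, x). h @ [x]) ` ({h :: ('l \<times> 'o outcome) list. length h = t} \<times> UNIV)"
  proof (intro set_eqI iffI)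
    fix h1 :: "('l \<times> 'o outcome) list"
    assume "h1 \<in> {h. length h = Suc t}"
    then have "h1 = butlast h1 @ [last h1]" "length (butlast h1) = t"
      by (auto intro!: append_butlast_last_id[symmetric])
    then show "h1 \<in> (\<lambda>(h, x). h @ [x]) ` ({h. length h = t} \<times> UNIV)"
      by (metis (mono_tags, lifting) SigmaI UNIV_I case_prod_conv image_eqI mem_Collect_eq)
  qed auto
  have inj: "inj_on (\<lambda>(h, x). h @ [x]) ({h :: ('l \<times> 'o outcome) list. length h = t} \<times> UNIV)"
    by (auto simp: inj_on_def)
  have "(\<Sum>h1\<in>{h. length h = Suc t}. g h1) = (\<Sum>(h, x)\<in>{h :: ('l \<times> 'o outcome) list. length h = t} \<times> UNIV. g (h @ [x]))"
    unfolding img by (subst sum.reindex[OF inj]) (simp add: case_prod_unfold)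
  also have "\<dots> = (\<Sum>h\<in>{h. length h = t}. \<Sum>x\<in>UNIV. g (h @ [x]))"
    by (subst sum.cartesian_product[symmetric]) simp
  also have "\<dots> = (\<Sum>h\<in>{h. length h = t}. \<Sum>l\<in>UNIV. \<Sum>r\<in>UNIV. g (h @ [(l, r)]))"
    by (subst sum_pairs) simp
  finally show ?thesis .
qed

lemma exp_joint_Suc:
  fixes mu0 :: "'th::finite pmf"
    and q :: "'th \<Rightarrow> 'l::finite \<Rightarrow> 'o::finite pmf"
    and G :: "'th \<times> ('l, 'o) hist \<Rightarrow> real"
  shows "measure_pmf.expectation (joint mu0 p q pol (Suc t)) G
    = measure_pmf.expectation (joint mu0 p q pol t) (\<lambda>(\<theta>', h). \<Sum>l\<in>UNIV. pmf (pol h) l *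
        (\<Sum>r\<in>UNIV. pmf (step p q (nu t h) \<theta>' l) r * G (\<theta>', h @ [(l, r)])))"
proof -
  let ?A = "(UNIV :: 'th set) \<times> {h :: ('l, 'o) hist. length h = t}"
  have finA: "finite ?A" by (rule finite_cartesian_product[OF finite_class.finite_UNIV finite_H])
  let ?f = "\<lambda>(\<theta>, h). pol h \<bind> (\<lambda>l. map_pmf (\<lambda>r. (\<theta>, h @ [(l, r)])) (step p q (nu t h) \<theta> l))"
  have fin: "finite (set_pmf (?f x))" for x
    by (auto simp: set_bind_pmf split: prod.split)
  have inner: "measure_pmf.expectation (pol h \<bind> (\<lambda>l. map_pmf (\<lambda>r. (\<theta>, h @ [(l, r)])) (step p q (nu t h) \<theta> l))) G = (\<Sum>l\<in>UNIV. pmf (pol h) l *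
        (\<Sum>r\<in>UNIV. pmf (step p q (nu t h) \<theta> l) r * G (\<theta>, h @ [(l, r)])))" for \<theta> h
    by (simp add: pmf_expectation_bind[of UNIV] exp_finite_type)
  let ?K = "\<lambda>(\<theta>', h). \<Sum>l\<in>UNIV. pmf (pol h) l *
        (\<Sum>r\<in>UNIV. pmf (step p q (nu t h) \<theta>' l) r * G (\<theta>', h @ [(l, r)]))"
  have "measure_pmf.expectation (joint mu0 p q pol (Suc t)) G
      = (\<Sum>a\<in>?A. pmf (joint mu0 p q pol t) a *\<^sub>R measure_pmf.expectation (?f a) G)"
    by (simp only: joint.simps) (rule pmf_expectation_bind[OF finA fin set_joint])
  also have "\<dots> = (\<Sum>a\<in>?A. ?K a * pmf (joint mu0 p q pol t) a)"
  proof (intro sum.cong refl)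
    fix a assume "a \<in> ?A"
    obtain \<theta> h where a: "a = (\<theta>, h)" by (cases a)
    show "pmf (joint mu0 p q pol t) a *\<^sub>R measure_pmf.expectation (?f a) G = ?K a * pmf (joint mu0 p q pol t) a"
      unfolding a prod.case inner by (simp add: mult.commute)
  qed
  also have "\<dots> = measure_pmf.expectation (joint mu0 p q pol t) ?K"
    using set_joint[of mu0 p q pol t]
    by (intro integral_measure_pmf_real[symmetric] finA) auto
  finally show ?thesis .
qed

lemma sum_swap3:
  fixes f :: "'a \<Rightarrow> 'b \<Rightarrow> 'c \<Rightarrow> real"
  assumes "finite A" "finite B" "finite C"
  shows "(\<Sum>a\<in>A. \<Sum>b\<in>B. \<Sum>c\<in>C. f a b c) = (\<Sum>b\<in>B. \<Sum>c\<in>C. \<Sum>a\<in>A. f a b c)"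
proof -
  have "(\<Sum>a\<in>A. \<Sum>b\<in>B. \<Sum>c\<in>C. f a b c) = (\<Sum>b\<in>B. \<Sum>a\<in>A. \<Sum>c\<in>C. f a b c)"
    by (rule sum.swap)
  also have "\<dots> = (\<Sum>b\<in>B. \<Sum>c\<in>C. \<Sum>a\<in>A. f a b c)"
    by (intro sum.cong refl sum.swap)
  finally show ?thesis .
qed

lemma bayes:
  fixes mu0 :: "'th::finite pmf" and q :: "'th \<Rightarrow> 'l::finite \<Rightarrow> 'o::finite pmf"
    and pol :: "('l, 'o) hist \<Rightarrow> 'l pmf"
  assumes p: "\<forall>\<theta>' l'. 0 < p \<theta>' l' \<and> p \<theta>' l' < 1"
  shows "\<exists>C. \<forall>G. measure_pmf.expectation (joint mu0 p q pol t) G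
     = (\<Sum>h\<in>{h. length h = t}. C h * (\<Sum>\<theta>'\<in>UNIV. mu mu0 p q t h \<theta>' * G (\<theta>', h)))"
proof (induction t)
  case 0
  have "{h :: ('l,'o) hist. length h = 0} = {[]}" by auto
  then show ?case by (intro exI[of _ "\<lambda>_. 1"]) (simp add: exp_finite_type)
next
  case (Suc t)
  then obtain C where C: "\<forall>G. measure_pmf.expectation (joint mu0 p q pol t) G
     = (\<Sum>h\<in>{h. length h = t}. C h * (\<Sum>\<theta>'\<in>UNIV. mu mu0 p q t h \<theta>' * G (\<theta>', h)))" by blast
  define C' where "C' h1 = C (butlast h1) * pmf (pol (butlast h1)) (fst (last h1))
     * Zf mu0 p q t (butlast h1) (fst (last h1)) (snd (last h1))" for h1
  show ?case
  proof (intro exI allI)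
    fix G :: "'th \<times> ('l,'o) hist \<Rightarrow> real"
    define S where "S h1 = (\<Sum>\<theta>'\<in>UNIV. mu mu0 p q (Suc t) h1 \<theta>' * G (\<theta>', h1))" for h1
    have key: "(\<Sum>\<theta>'\<in>UNIV. mu mu0 p q t h \<theta>' * (\<Sum>l\<in>UNIV. pmf (pol h) l *
        (\<Sum>r\<in>UNIV. pmf (step p q (nu t h) \<theta>' l) r * G (\<theta>', h @ [(l, r)]))))
      = (\<Sum>l\<in>UNIV. \<Sum>r\<in>UNIV. pmf (pol h) l * Zf mu0 p q t h l r * S (h @ [(l,r)]))"
      if "length h = t" for h
    proof -
      have "(\<Sum>\<theta>'\<in>UNIV. mu mu0 p q t h \<theta>' * (\<Sum>l\<in>UNIV. pmf (pol h) l *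
        (\<Sum>r\<in>UNIV. pmf (step p q (nu t h) \<theta>' l) r * G (\<theta>', h @ [(l, r)]))))
        = (\<Sum>\<theta>'\<in>UNIV. \<Sum>l\<in>UNIV. \<Sum>r\<in>UNIV. pmf (pol h) l *
             (mu mu0 p q t h \<theta>' * pmf (step p q (nu t h) \<theta>' l) r) * G (\<theta>', h @ [(l, r)]))"
        by (simp add: sum_distrib_left mult_ac)
      also have "\<dots> = (\<Sum>\<theta>'\<in>UNIV. \<Sum>l\<in>UNIV. \<Sum>r\<in>UNIV. pmf (pol h) l *
             (Zf mu0 p q t h l r * mu mu0 p q (Suc t) (h @ [(l, r)]) \<theta>') * G (\<theta>', h @ [(l, r)]))"
        using bayes_step[OF p that] by simp
      also have "\<dots> = (\<Sum>l\<in>UNIV. \<Sum>r\<in>UNIV. \<Sum>\<theta>'\<in>UNIV. pmf (pol h) l *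
             (Zf mu0 p q t h l r * mu mu0 p q (Suc t) (h @ [(l, r)]) \<theta>') * G (\<theta>', h @ [(l, r)]))"
        by (rule sum_swap3) auto
      also have "\<dots> = (\<Sum>l\<in>UNIV. \<Sum>r\<in>UNIV. pmf (pol h) l * Zf mu0 p q t h l r * S (h @ [(l,r)]))"
        by (simp add: S_def sum_distrib_left mult_ac)
      finally show ?thesis .
    qed
    have "measure_pmf.expectation (joint mu0 p q pol (Suc t)) G
       = measure_pmf.expectation (joint mu0 p q pol t) (\<lambda>(\<theta>', h). \<Sum>l\<in>UNIV. pmf (pol h) l *
        (\<Sum>r\<in>UNIV. pmf (step p q (nu t h) \<theta>' l) r * G (\<theta>', h @ [(l, r)])))"
      by (rule exp_joint_Suc)
    also have "\<dots> = (\<Sum>h\<in>{h. length h = t}. C h * (\<Sum>\<theta>'\<in>UNIV. mu mu0 p q t h \<theta>' *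
        (\<Sum>l\<in>UNIV. pmf (pol h) l *
        (\<Sum>r\<in>UNIV. pmf (step p q (nu t h) \<theta>' l) r * G (\<theta>', h @ [(l, r)])))))"
      using C by simp
    also have "\<dots> = (\<Sum>h\<in>{h. length h = t}. \<Sum>l\<in>UNIV. \<Sum>r\<in>UNIV. C' (h @ [(l, r)]) * S (h @ [(l, r)]))"
      by (intro sum.cong refl) (simp only: mem_Collect_eq key, simp add: C'_def sum_distrib_left mult_ac)
    also have "\<dots> = (\<Sum>h1\<in>{h. length h = Suc t}. C' h1 * S h1)"
      by (rule sum_H_Suc[symmetric])
    finally show "measure_pmf.expectation (joint mu0 p q pol (Suc t)) G
      = (\<Sum>h\<in>{h. length h = Suc t}. C' h * (\<Sum>\<theta>'\<in>UNIV. mu mu0 p q (Suc t) h \<theta>' * G (\<theta>', h)))"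
      unfolding S_def .
  qed
qed

lemma sum_q1:
  fixes q :: "'th \<Rightarrow> 'l \<Rightarrow> 'o::finite pmf"
  shows "(\<Sum>w\<in>UNIV. pmf (q x l) w) = 1"
  using sum_pmf_eq_1[of UNIV "q x l"] by simp

lemma incr_zero:
  fixes mu0 :: "'th::finite pmf" and q :: "'th \<Rightarrow> 'l::finite \<Rightarrow> 'o::finite pmf"
  assumes p: "\<forall>\<theta>' l'. 0 < p \<theta>' l' \<and> p \<theta>' l' < 1" and len: "length h = t"
  shows "(\<Sum>\<theta>'\<in>UNIV. mu mu0 p q t h \<theta>' * (\<Sum>r\<in>UNIV. pmf (step p q (nu t h) \<theta>' l) r *
           (mutilde mu0 p q (Suc t) (h @ [(l, r)]) \<theta> - mutilde mu0 p q t (h @ [(l, r)]) \<theta>))) = 0"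
proof -
  define m where "m = mu mu0 p q t h"
  define pb where "pb = (\<Sum>\<theta>'\<in>UNIV. p \<theta>' l * m \<theta>')"
  define D where "D r = mutilde mu0 p q (Suc t) (h @ [(l, r)]) \<theta> - mutilde mu0 p q t (h @ [(l, r)]) \<theta>" for r
  have D: "D r = mu mu0 p q (Suc t) (h @ [(l, r)]) \<theta> - m \<theta>
     + m \<theta> * nu t h * nu (Suc t) (h @ [(l, r)]) * (p \<theta> l - pb) / (1 - pb)
     - m \<theta> * nu t h * (1 - nu (Suc t) (h @ [(l, r)])) * (p \<theta> l - pb) / pb" for r
    unfolding D_def using len
    by (simp add: mutilde_def pbar_def mu_snoc nu_snoc' lam_append m_def pb_def del: nu.simps mu.simps)
  have m0: "\<And>x. m x \<ge> 0" using mu_inv[OF p] unfolding m_def by blast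
  have msum: "(\<Sum>y\<in>UNIV. m y) = 1 \<or> (\<forall>y. m y = 0)" using mu_inv[OF p] unfolding m_def by blast
  have pp: "\<And>x. 0 \<le> p x l" "\<And>x. p x l \<le> 1" using p by (auto simp: less_imp_le)
  show ?thesis
  proof (cases "nu t h = 1")
    case False
    then have n0: "nu t h = 0" using nu_01 by blast
    have "D Dead = 0" unfolding D using len n0 by (simp add: nu_snoc nu_snoc' mu_snoc m_def)
    then show ?thesis using False by (simp add: sum_step0 D_def[symmetric])
  next
    case True
    show ?thesis
    proof (cases "\<forall>y. m y = 0")
      case True then show ?thesis by (simp add: m_def[symmetric])
    next
      case False
      then have m1: "(\<Sum>y\<in>UNIV. m y) = 1" using msum by blast
      from False obtain y0 where y0: "m y0 \<noteq> 0" by blast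
      then have y0p: "m y0 > 0" using m0 by (simp add: order_less_le)
      have "p y0 l * m y0 > 0" using y0p p by simp
      also have "p y0 l * m y0 \<le> pb" unfolding pb_def
        by (rule member_le_sum) (use m0 pp in auto)
      finally have pbpos: "pb > 0" .
      have s1: "(\<Sum>y\<in>UNIV. (1 - p y l) * m y) = 1 - pb"
        using m1 by (simp add: pb_def algebra_simps sum_subtractf)
      have "(1 - p y0 l) * m y0 > 0" using y0p p by simp
      also have "(1 - p y0 l) * m y0 \<le> (\<Sum>y\<in>UNIV. (1 - p y l) * m y)"
        by (rule member_le_sum) (use m0 pp in auto)
      finally have pblt: "pb < 1" using s1 by simp
      define f where "f w x = (1 - p x l) * pmf (q x l) w * m x" for w x
      define Z where "Z w = (\<Sum>x\<in>UNIV. f w x)" for w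
      define c where "c = - m \<theta> + m \<theta> * (p \<theta> l - pb) / (1 - pb)"
      have f0: "\<And>w x. f w x \<ge> 0" unfolding f_def using m0 pp by simp
      have DDied: "D Died = 0"
      proof -
        have "mu mu0 p q (Suc t) (h @ [(l, Died)]) \<theta> = p \<theta> l * m \<theta> / pb"
          using len True by (simp add: nu_snoc nu_snoc' mu_snoc lam_append normalize_def m_def pb_def nth_append)
        moreover have "nu (Suc t) (h @ [(l, Died)]) = 0" using len nu_snoc[OF len, of l Died] by simp
        ultimately show ?thesis unfolding D using len True pbpos
          by (simp add: field_simps del: nu.simps mu.simps)
      qed
      have DObs: "D (Obs w) = normalize (f w) \<theta> + c" for w
      proof -
        have "mu mu0 p q (Suc t) (h @ [(l, Obs w)]) \<theta> = normalize (f w) \<theta>"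
          using len True by (simp add: nu_snoc nu_snoc' mu_snoc lam_append m_def f_def[abs_def] nth_append)
        moreover have "nu (Suc t) (h @ [(l, Obs w)]) = 1" using len True nu_snoc[OF len, of l "Obs w"] by simp
        ultimately show ?thesis unfolding D c_def using len True by (simp del: nu.simps mu.simps)
      qed
      have inner: "(\<Sum>r\<in>UNIV. pmf (step p q (nu t h) \<theta>' l) r * D r)
         = (\<Sum>w\<in>UNIV. (1 - p \<theta>' l) * pmf (q \<theta>' l) w * (normalize (f w) \<theta> + c))" for \<theta>'
      proof -
        have "(\<Sum>r\<in>UNIV. pmf (step p q 1 \<theta>' l) r * D r)
          = p \<theta>' l * D Died + (\<Sum>w\<in>UNIV. (1 - p \<theta>' l) * pmf (q \<theta>' l) w * D (Obs w))"
          using sum_step1[of p \<theta>' l q D] pp[of \<theta>'] by blast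
        then show ?thesis by (simp only: True DDied DObs mult_zero_right add_0_left)
      qed
      have "(\<Sum>\<theta>'\<in>UNIV. m \<theta>' * (\<Sum>r\<in>UNIV. pmf (step p q (nu t h) \<theta>' l) r * D r))
          = (\<Sum>\<theta>'\<in>UNIV. \<Sum>w\<in>UNIV. f w \<theta>' * (normalize (f w) \<theta> + c))"
        by (simp only: inner sum_distrib_left) (simp add: f_def mult_ac)
      also have "\<dots> = (\<Sum>w\<in>UNIV. Z w * (normalize (f w) \<theta> + c))"
        by (simp only: Z_def sum_distrib_right) (rule sum.swap)
      finally have calc: "(\<Sum>\<theta>'\<in>UNIV. m \<theta>' * (\<Sum>r\<in>UNIV. pmf (step p q (nu t h) \<theta>' l) r * D r))
          = (\<Sum>w\<in>UNIV. Z w * (normalize (f w) \<theta> + c))" .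
      have zn: "Z w * normalize (f w) \<theta> = f w \<theta>" for w
        using normalize_scale[of "f w" \<theta>] f0 unfolding Z_def by simp
      have "(\<Sum>w\<in>UNIV. Z w * (normalize (f w) \<theta> + c)) = (\<Sum>w\<in>UNIV. f w \<theta> + c * Z w)"
        by (rule sum.cong) (simp_all add: distrib_left zn mult.commute)
      also have "\<dots> = (\<Sum>w\<in>UNIV. f w \<theta>) + c * (\<Sum>w\<in>UNIV. Z w)"
        by (simp add: sum.distrib sum_distrib_left)
      finally have step3: "(\<Sum>w\<in>UNIV. Z w * (normalize (f w) \<theta> + c)) = (\<Sum>w\<in>UNIV. f w \<theta>) + c * (\<Sum>w\<in>UNIV. Z w)" .
      have "(\<Sum>w\<in>UNIV. f w \<theta>) = (\<Sum>w\<in>UNIV. pmf (q \<theta> l) w) * ((1 - p \<theta> l) * m \<theta>)"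
        by (simp add: f_def sum_distrib_left[symmetric] mult_ac)
      then have fs: "(\<Sum>w\<in>UNIV. f w \<theta>) = (1 - p \<theta> l) * m \<theta>" by (simp add: sum_q1)
      have zs: "(\<Sum>w\<in>UNIV. Z w) = 1 - pb"
      proof -
        have "(\<Sum>w\<in>UNIV. Z w) = (\<Sum>x\<in>UNIV. (1 - p x l) * m x * (\<Sum>w\<in>UNIV. pmf (q x l) w))"
          unfolding Z_def f_def by (rule trans[OF sum.swap]) (intro sum.cong refl, simp add: sum_distrib_left mult_ac)
        then show ?thesis using s1 by (simp add: sum_q1)
      qed
      have fin: "(1 - p \<theta> l) * m \<theta> + c * (1 - pb) = 0"
        unfolding c_def using pblt by (simp add: field_simps)
      have "(\<Sum>\<theta>'\<in>UNIV. m \<theta>' * (\<Sum>r\<in>UNIV. pmf (step p q (nu t h) \<theta>' l) r * D r)) = 0"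
        using calc step3 fs zs fin by simp
      then show ?thesis unfolding m_def D_def .
    qed
  qed
qed

theorem proposition2:
  fixes mu0 :: "'th::finite pmf"
    and p :: "'th \<Rightarrow> 'l::finite \<Rightarrow> real"
    and q :: "'th \<Rightarrow> 'l \<Rightarrow> 'o::finite pmf"
    and pol :: "('l, 'o) hist \<Rightarrow> 'l pmf"
    and t :: nat and l :: 'l and m :: "'th \<Rightarrow> real" and v :: real and \<theta> :: 'th
  assumes "\<forall>\<theta>' l'. 0 < p \<theta>' l' \<and> p \<theta>' l' < 1"
  shows "measure_pmf.expectation (joint mu0 p q pol (Suc t))
           (\<lambda>(\<theta>', h). if lam t h = l \<and> mu mu0 p q t h = m \<and> nu t h = v
                      then mutilde mu0 p q (Suc t) h \<theta> - mutilde mu0 p q t h \<theta> else 0) = 0"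
proof -
  note p = assms
  define F :: "'th \<times> ('l, 'o) hist \<Rightarrow> real" where
    "F = (\<lambda>(\<theta>', h). if lam t h = l \<and> mu mu0 p q t h = m \<and> nu t h = v
                      then mutilde mu0 p q (Suc t) h \<theta> - mutilde mu0 p q t h \<theta> else 0)"
  have "\<exists>C. \<forall>G. measure_pmf.expectation (joint mu0 p q pol t) G
     = (\<Sum>h\<in>{h. length h = t}. C h * (\<Sum>\<theta>'\<in>UNIV. mu mu0 p q t h \<theta>' * G (\<theta>', h)))"
    by (rule bayes[OF p])
  then obtain C where C: "\<forall>G. measure_pmf.expectation (joint mu0 p q pol t) G
     = (\<Sum>h\<in>{h. length h = t}. C h * (\<Sum>\<theta>'\<in>UNIV. mu mu0 p q t h \<theta>' * G (\<theta>', h)))"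
    by blast
  define D where "D h l' r = mutilde mu0 p q (Suc t) (h @ [(l', r)]) \<theta> - mutilde mu0 p q t (h @ [(l', r)]) \<theta>"
    for h l' r
  have zero: "(\<Sum>\<theta>'\<in>UNIV. mu mu0 p q t h \<theta>' * (\<Sum>l'\<in>UNIV. pmf (pol h) l' *
        (\<Sum>r\<in>UNIV. pmf (step p q (nu t h) \<theta>' l') r * F (\<theta>', h @ [(l', r)])))) = 0"
    if len: "length h = t" for h
  proof (cases "mu mu0 p q t h = m \<and> nu t h = v")
    case False
    then show ?thesis using len by (cases "mu mu0 p q t h = m") (simp_all add: F_def lam_append mu_snoc nu_snoc' del: mu.simps nu.simps)
  next
    case True
    have inner: "(\<Sum>l'\<in>UNIV. pmf (pol h) l' *
        (\<Sum>r\<in>UNIV. pmf (step p q (nu t h) \<theta>' l') r * F (\<theta>', h @ [(l', r)])))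
      = pmf (pol h) l * (\<Sum>r\<in>UNIV. pmf (step p q (nu t h) \<theta>' l) r * D h l r)" for \<theta>'
    proof -
      have "(\<Sum>l'\<in>UNIV. pmf (pol h) l' *
        (\<Sum>r\<in>UNIV. pmf (step p q (nu t h) \<theta>' l') r * F (\<theta>', h @ [(l', r)])))
        = (\<Sum>l'\<in>UNIV. if l' = l then pmf (pol h) l * (\<Sum>r\<in>UNIV. pmf (step p q (nu t h) \<theta>' l) r * D h l r) else 0)"
        using len True by (intro sum.cong refl) (auto simp: F_def D_def lam_append mu_snoc nu_snoc' simp del: mu.simps nu.simps)
      then show ?thesis by simp
    qed
    have "(\<Sum>\<theta>'\<in>UNIV. mu mu0 p q t h \<theta>' * (\<Sum>l'\<in>UNIV. pmf (pol h) l' *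
        (\<Sum>r\<in>UNIV. pmf (step p q (nu t h) \<theta>' l') r * F (\<theta>', h @ [(l', r)]))))
      = pmf (pol h) l * (\<Sum>\<theta>'\<in>UNIV. mu mu0 p q t h \<theta>' * (\<Sum>r\<in>UNIV. pmf (step p q (nu t h) \<theta>' l) r * D h l r))"
      unfolding inner by (simp add: sum_distrib_left mult_ac)
    also have "\<dots> = 0"
      using incr_zero[OF p len, of mu0 q l \<theta>] by (simp add: D_def)
    finally show ?thesis .
  qed
  have "measure_pmf.expectation (joint mu0 p q pol (Suc t)) F
     = measure_pmf.expectation (joint mu0 p q pol t) (\<lambda>(\<theta>', h). \<Sum>l\<in>UNIV. pmf (pol h) l *
        (\<Sum>r\<in>UNIV. pmf (step p q (nu t h) \<theta>' l) r * F (\<theta>', h @ [(l, r)])))"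
    by (rule exp_joint_Suc)
  also have "\<dots> = (\<Sum>h\<in>{h. length h = t}. C h * (\<Sum>\<theta>'\<in>UNIV. mu mu0 p q t h \<theta>' *
        (\<Sum>l'\<in>UNIV. pmf (pol h) l' *
        (\<Sum>r\<in>UNIV. pmf (step p q (nu t h) \<theta>' l') r * F (\<theta>', h @ [(l', r)])))))"
    using C by simp
  also have "\<dots> = 0"
    by (rule sum.neutral) (simp add: zero)
  finally show ?thesis unfolding F_def .
qed

end
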